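(* Let $\mathrm{k}$ be an infinite field and $\mathcal{A}$ a unital associative $\mathrm{k}$-algebra satisfying $\mathbf{H}_{\mathrm{s}}$. Let $A$ be a finite subset of $\mathcal{A}$ with $A\cap U(\mathcal{A})\neq\emptyset$. Then the $\mathrm{k}$-subspace $\mathrm{k}\langle A\rangle$ admits a basis consisting of invertible elements of $\mathcal{A}$.
   Context: $U(\mathcal{A})$ is the group of invertible elements; $\mathrm{k}\langle A\rangle$ is the linear span of $A$. Hypothesis $\mathbf{H}_{\mathrm{s}}$: $\mathcal{A}$ is finite-dimensional over $\mathrm{k}$, or $\mathrm{k}\in\{\mathbb{R},\mathbb{C}\}$ and $\mathcal{A}$ is a Banach algebra over $\mathrm{k}$, or $\mathcal{A}$ is a finite product of field extensions of $\mathrm{k}$. *)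

theory Defs
  imports Complex_Main
begin

text \<open>A unital associative k-algebra: the ring structure of the type 'a (class ring_1,
 so 1 is the unit, associativity is built in) together with a scalar multiplication
 s making 'a a k-vector space, compatible with the multiplication.\<close>
definition k_algebra :: "('k::field \<Rightarrow> 'a::ring_1 \<Rightarrow> 'a) \<Rightarrow> bool" where
  "k_algebra s \<longleftrightarrow> vector_space s \<and>
     (\<forall>c x y. s c (x * y) = s c x * y \<and> s c (x * y) = x * s c y)"

definition units :: "'a::ring_1 set" where
  "units = {x. \<exists>y. x * y = 1 \<and> y * x = 1}"

definition fin_dim_alg :: "('k::field \<Rightarrow> 'a::ring_1 \<Rightarrow> 'a) \<Rightarrow> bool" where
  "fin_dim_alg s \<longleftrightarrow> (\<exists>B. finite_dimensional_vector_space s B)"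

text \<open>N is a complete submultiplicative norm on A, where the scalar field k carries
 the absolute value a (i.e. A is a Banach algebra over (k, a)).\<close>
definition banach_alg_norm ::
  "('k::field \<Rightarrow> 'a::ring_1 \<Rightarrow> 'a) \<Rightarrow> ('k \<Rightarrow> real) \<Rightarrow> ('a \<Rightarrow> real) \<Rightarrow> bool" where
  "banach_alg_norm s a N \<longleftrightarrow>
     (\<forall>x. N x = 0 \<longleftrightarrow> x = 0) \<and>
     (\<forall>x y. N (x + y) \<le> N x + N y) \<and>
     (\<forall>c x. N (s c x) = a c * N x) \<and>
     (\<forall>x y. N (x * y) \<le> N x * N y) \<and>
     (\<forall>X :: nat \<Rightarrow> 'a.
        (\<forall>e>0. \<exists>M. \<forall>m\<ge>M. \<forall>n\<ge>M. N (X m - X n) < e) \<longrightarrow>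
        (\<exists>L. \<forall>e>0. \<exists>M. \<forall>n\<ge>M. N (X n - L) < e))"

text \<open>k is (a copy of) R or C, identified via a field isomorphism phi, and A is a
 Banach algebra over it.\<close>
definition banach_over_R_or_C :: "('k::field \<Rightarrow> 'a::ring_1 \<Rightarrow> 'a) \<Rightarrow> bool" where
  "banach_over_R_or_C s \<longleftrightarrow>
     (\<exists>(\<phi>::'k \<Rightarrow> real) N. bij \<phi> \<and> (\<forall>x y. \<phi> (x + y) = \<phi> x + \<phi> y \<and> \<phi> (x * y) = \<phi> x * \<phi> y)
        \<and> banach_alg_norm s (\<lambda>c. \<bar>\<phi> c\<bar>) N) \<or>
     (\<exists>(\<phi>::'k \<Rightarrow> complex) N. bij \<phi> \<and> (\<forall>x y. \<phi> (x + y) = \<phi> x + \<phi> y \<and> \<phi> (x * y) = \<phi> x * \<phi> y)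
        \<and> banach_alg_norm s (\<lambda>c. cmod (\<phi> c)) N)"

text \<open>A is (isomorphic to) a finite product of field extensions of k: A is commutative
 and 1 is a sum of finitely many pairwise orthogonal nonzero idempotents e i such that each
 factor e i * A is a field with unit e i (it is then a field extension of k via c \<mapsto> s c (e i)).\<close>
definition fin_prod_field_ext :: "('k::field \<Rightarrow> 'a::ring_1 \<Rightarrow> 'a) \<Rightarrow> bool" where
  "fin_prod_field_ext s \<longleftrightarrow>
     (\<forall>x y :: 'a. x * y = y * x) \<and>
     (\<exists>(n::nat) (e::nat \<Rightarrow> 'a).
        (\<Sum>i<n. e i) = 1 \<and>
        (\<forall>i<n. \<forall>j<n. i \<noteq> j \<longrightarrow> e i * e j = 0) \<and>
        (\<forall>i<n. e i * e i = e i \<and> e i \<noteq> 0 \<and>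
           (\<forall>x. e i * x \<noteq> 0 \<longrightarrow> (\<exists>y. (e i * x) * (e i * y) = e i))))"

definition H_s :: "('k::field \<Rightarrow> 'a::ring_1 \<Rightarrow> 'a) \<Rightarrow> bool" where
  "H_s s \<longleftrightarrow> fin_dim_alg s \<or> banach_over_R_or_C s \<or> fin_prod_field_ext s"

end

theory Submission
  imports Defs "HOL-Computational_Algebra.Polynomial"
begin


lemma units_1: "1 \<in> units" by (auto simp: units_def)

lemma units_mult: assumes "x \<in> units" "y \<in> units" shows "x * y \<in> units"
proof -
  from assms obtain x' y' where "x*x' = 1" "x'*x=1" "y*y'=1" "y'*y=1" by (auto simp: units_def)
  then have "(x*y)*(y'*x') = 1" "(y'*x')*(x*y) = 1"
    by (metis mult.assoc mult_1_left)+
  then show ?thesis by (auto simp: units_def)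
qed

lemma units_lr: assumes "x * y = 1" "z * x = 1" shows "x \<in> units"
proof -
  have "z = y" by (metis assms mult.assoc mult_1_left mult_1_right)
  then show ?thesis using assms by (auto simp: units_def)
qed

locale kalg = vector_space s for s :: "'k::field \<Rightarrow> 'a::ring_1 \<Rightarrow> 'a" +
  assumes ml: "s c (x*y) = s c x * y" and mr: "s c (x*y) = x * s c y"
begin

lemma sl: "s c x = s c 1 * x" using ml[of c 1 x] by simp
lemma sr: "s c x = x * s c 1" using mr[of c x 1] by simp
lemma s1mult: "s c 1 * s d 1 = s (c*d) 1"
  by (metis sl scale_scale)

lemma s1_units: assumes "c \<noteq> 0" shows "s c 1 \<in> units"
proof -
  have "s c 1 * s (inverse c) 1 = 1" "s (inverse c) 1 * s c 1 = 1"
    using assms by (simp_all add: s1mult)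
  then show ?thesis by (auto simp: units_def)
qed

lemma s_units: assumes "c \<noteq> 0" "w \<in> units" shows "s c w \<in> units"
  using units_mult[OF s1_units[OF assms(1)] assms(2)] sl[of c w] by argo

lemma main_red:
  assumes fin: "finite A" and uA: "u \<in> A" and uU: "u \<in> units"
    and good: "\<And>y. \<exists>t. t \<noteq> 0 \<and> 1 + s t y \<in> units"
  shows "\<exists>B. B \<subseteq> units \<and> independent B \<and> span B = span A"
proof -
  have good2: "\<exists>t. t \<noteq> 0 \<and> u + s t v \<in> units" for v
  proof -
    obtain u' where u': "u*u' = 1" "u'*u = 1" using uU by (auto simp: units_def)
    obtain t where t: "t \<noteq> 0" "1 + s t (u'*v) \<in> units" using good by blast
    have "u * (1 + s t (u'*v)) = u + s t v"
      by (simp add: distrib_left mr[symmetric] mult.assoc[symmetric] u')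
    then show ?thesis using units_mult[OF uU t(2)] t(1) by metis
  qed
  define T where "T v = (SOME t. t \<noteq> 0 \<and> u + s t v \<in> units)" for v
  have T: "T v \<noteq> 0" "u + s (T v) v \<in> units" for v
    using someI_ex[OF good2[of v]] by (auto simp: T_def)
  have u0: "u \<noteq> 0" using uU by (auto simp: units_def)
  have iu: "independent {u}" using u0 by (simp add: independent_insert)
  obtain B where B: "{u} \<subseteq> B" "B \<subseteq> A" "independent B" "A \<subseteq> span B"
    using maximal_independent_subset_extend[of "{u}" A] iu uA by auto
  have finB: "finite B" using B fin finite_subset by blast
  define f where "f v = (if v = u then u else u + s (T v) v)" for v
  define B' where "B' = f ` B"
  have B'U: "B' \<subseteq> units" using T uU by (auto simp: B'_def f_def)
  have uB: "u \<in> B" using B by auto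
  have B'sp: "B' \<subseteq> span B"
  proof
    fix x assume "x \<in> B'"
    then obtain v where v: "v \<in> B" "x = f v" by (auto simp: B'_def)
    have "u + s (T v) v \<in> span B" using v uB by (intro span_add span_scale span_base)
    then show "x \<in> span B" using v uB span_base by (auto simp: f_def)
  qed
  have Bsp: "B \<subseteq> span B'"
  proof
    fix v assume v: "v \<in> B"
    have uB': "u \<in> span B'" using uB by (auto simp: B'_def f_def intro!: span_base image_eqI[of _ _ u])
    show "v \<in> span B'"
    proof (cases "v = u")
      case True then show ?thesis using uB' by simp
    next
      case False
      have fv: "u + s (T v) v \<in> span B'" using v False
        by (auto simp: B'_def f_def intro!: span_base image_eqI[of _ _ v])
      have "v = s (inverse (T v)) ((u + s (T v) v) - u)"
        using T(1)[of v] by (simp add: scale_right_diff_distrib)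
      also have "\<dots> \<in> span B'" using fv uB' by (intro span_scale span_diff)
      finally show ?thesis .
    qed
  qed
  have speq: "span B' = span B" using B'sp Bsp by (simp add: span_eq)
  have cardle: "card B' \<le> card B" unfolding B'_def using finB card_image_le by blast
  have finB': "finite B'" using finB by (simp add: B'_def)
  have indB': "independent B'"
  proof (rule ccontr)
    assume "\<not> independent B'"
    then obtain a where a: "a \<in> B'" "a \<in> span (B' - {a})" by (auto simp: dependent_def)
    have "B' \<subseteq> span (B' - {a})"
    proof
      fix x assume "x \<in> B'"
      then show "x \<in> span (B' - {a})"
        using a(2) span_base[of x "B' - {a}"] by (cases "x = a") auto
    qed
    then have "span B' \<subseteq> span (B' - {a})"
      by (metis span_minimal subspace_span)
    then have "B \<subseteq> span (B' - {a})" using Bsp by blast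
    then have "card B \<le> card (B' - {a})"
      using independent_span_bound[of "B' - {a}" B] finB' B(3) by auto
    moreover have "card (B' - {a}) < card B'" using a finB' by (meson card_Diff1_less)
    ultimately show False using cardle by simp
  qed
  have "span B = span A"
  proof
    show "span B \<subseteq> span A" using B(2) by (rule span_mono)
    have "span A \<subseteq> span (span B)" using B(4) by (rule span_mono)
    then show "span A \<subseteq> span B" by (simp add: span_span)
  qed
  then have "span B' = span A" using speq by simp
  then show ?thesis using B'U indB' by blast
qed

end


lemma subsing_finite: assumes "\<And>a b. a \<in> S \<Longrightarrow> b \<in> S \<Longrightarrow> a = b" shows "finite S"
proof (cases "S = {}")
  case False
  then obtain a where "a \<in> S" by blast
  then have "S = {a}" using assms by blast
  then show ?thesis by simp
qed simp

context kalg begin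

lemma good_prod:
  fixes e :: "nat \<Rightarrow> 'a"
  assumes comm: "\<And>x y :: 'a. x * y = y * x"
    and sum1: "(\<Sum>i<n. e i) = 1"
    and orth: "\<And>i j. i < n \<Longrightarrow> j < n \<Longrightarrow> i \<noteq> j \<Longrightarrow> e i * e j = 0"
    and idem: "\<And>i. i < n \<Longrightarrow> e i * e i = e i"
    and nz: "\<And>i. i < n \<Longrightarrow> e i \<noteq> 0"
    and fld: "\<And>i x. i < n \<Longrightarrow> e i * x \<noteq> 0 \<Longrightarrow> (\<exists>y. (e i * x) * (e i * y) = e i)"
    and inf: "infinite (UNIV :: 'k set)"
  shows "\<exists>t. t \<noteq> 0 \<and> 1 + s t y \<in> units"
proof -
  have crit: "z \<in> units" if z: "\<And>i. i < n \<Longrightarrow> e i * z \<noteq> 0" for z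
  proof -
    have "\<exists>w. (e i * z) * (e i * w) = e i" if "i < n" for i using fld z that by blast
    then obtain w where w: "\<And>i. i < n \<Longrightarrow> (e i * z) * (e i * w i) = e i" by metis
    have zi: "z * (e i * w i) = e i" if i: "i < n" for i
    proof -
      define a where "a = z * (e i * w i)"
      have 1: "e i * a = e i" using w[OF i] by (simp add: a_def mult.assoc)
      have 2: "a = e i * (z * w i)" unfolding a_def by (metis comm mult.assoc)
      have "e i * a = a" using 2 idem[OF i] by (metis mult.assoc)
      then show ?thesis using 1 a_def by simp
    qed
    have "z * (\<Sum>i<n. e i * w i) = (\<Sum>i<n. z * (e i * w i))" by (simp add: sum_distrib_left)
    also have "\<dots> = 1" using zi sum1 by simp
    finally have r: "z * (\<Sum>i<n. e i * w i) = 1" .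
    then have "(\<Sum>i<n. e i * w i) * z = 1" using comm by metis
    with r show ?thesis by (auto simp: units_def)
  qed
  define bad where "bad i = {t. e i * (1 + s t y) = 0}" for i
  have sub: "finite (bad i)" if i: "i < n" for i
  proof (rule subsing_finite)
    fix a b assume ab: "a \<in> bad i" "b \<in> bad i"
    show "a = b"
    proof (rule ccontr)
      assume ne: "a \<noteq> b"
      have ea: "e i + s a (e i * y) = 0" "e i + s b (e i * y) = 0"
        using ab by (simp_all add: bad_def distrib_left mr)
      then have "s a (e i * y) - s b (e i * y) = 0" by (metis diff_self add_diff_cancel_left)
      then have "s (a - b) (e i * y) = 0" by (simp add: scale_left_diff_distrib)
      then have "e i * y = 0" using ne by simp
      then have "e i = 0" using ea by simp
      then show False using nz i by simp
    qed
  qed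
  have "finite (insert 0 (\<Union>i<n. bad i))" using sub by auto
  then have "UNIV - insert 0 (\<Union>i<n. bad i) \<noteq> {}" using inf
    by (metis Diff_eq_empty_iff finite_subset)
  then obtain t where t: "t \<noteq> 0" "\<And>i. i < n \<Longrightarrow> t \<notin> bad i" by blast
  have "1 + s t y \<in> units" by (rule crit) (use t in \<open>auto simp: bad_def\<close>)
  then show ?thesis using t by blast
qed

end


lemma diff_pow_fact:
  fixes y a :: "'a::ring_1"
  assumes ay: "a*y = y*a"
  shows "\<exists>Q R. y^i - a^i = (y - a)*Q \<and> y^i - a^i = R*(y - a)"
proof (induction i)
  case 0 then show ?case by (auto intro!: exI[of _ 0])
next
  case (Suc i)
  then obtain Q R where QR: "y^i - a^i = (y - a)*Q" "y^i - a^i = R*(y - a)" by blast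
  have c: "y*(y-a) = (y-a)*y" using ay by (simp add: algebra_simps)
  have "y^Suc i - a^Suc i = y*(y^i - a^i) + (y - a)*a^i" by (simp add: algebra_simps)
  also have "\<dots> = y*((y-a)*Q) + (y-a)*a^i" using QR(1) by simp
  also have "\<dots> = (y-a)*(y*Q) + (y-a)*a^i" by (metis c mult.assoc)
  also have "\<dots> = (y-a)*(y*Q + a^i)" by (simp add: distrib_left)
  finally have L: "y^Suc i - a^Suc i = (y-a)*(y*Q + a^i)" .
  have "y^Suc i - a^Suc i = (y^i - a^i)*y + a^i*(y - a)" by (simp add: algebra_simps power_commutes)
  also have "\<dots> = (R*(y-a))*y + a^i*(y-a)" using QR(2) by simp
  also have "\<dots> = (R*y)*(y-a) + a^i*(y-a)" by (metis c mult.assoc)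
  also have "\<dots> = (R*y + a^i)*(y-a)" by (simp add: distrib_right)
  finally have "y^Suc i - a^Suc i = (R*y + a^i)*(y-a)" .
  with L show ?case by blast
qed

context kalg begin

lemma s1_pow: "(s l 1)^i = s (l^i) 1"
  by (induction i) (simp_all add: s1mult)

lemma s1_comm: "s l 1 * y = y * s l 1"
  using sl[of l y] sr[of l y] by simp

lemma poly_unit:
  fixes c :: "nat \<Rightarrow> 'k"
  assumes p0: "(\<Sum>i\<le>m. s (c i) (y^i)) = 0"
    and P: "(\<Sum>i\<le>m. c i * l^i) \<noteq> 0"
  shows "y - s l 1 \<in> units"
proof -
  define a where "a = s l 1"
  have "\<forall>i. \<exists>Q R. y^i - a^i = (y - a)*Q \<and> y^i - a^i = R*(y - a)"
  proof
    fix i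
    have "a*y = y*a" unfolding a_def by (rule s1_comm)
    then show "\<exists>Q R. y^i - a^i = (y - a)*Q \<and> y^i - a^i = R*(y - a)" by (rule diff_pow_fact)
  qed
  then obtain Q R where QR: "\<And>i. y^i - a^i = (y - a)*Q i" "\<And>i. y^i - a^i = R i*(y - a)" by metis
  define PP where "PP = (\<Sum>i\<le>m. c i * l^i)"
  have e: "(\<Sum>i\<le>m. s (c i) (y^i - a^i)) = - s PP 1"
  proof -
    have ai: "s (c i) (y^i - a^i) = s (c i) (y^i) - s (c i * l^i) 1" for i
    proof -
      have "a^i = s (l^i) 1" unfolding a_def by (rule s1_pow)
      then show ?thesis by (simp add: scale_right_diff_distrib)
    qed
    have "(\<Sum>i\<le>m. s (c i) (y^i - a^i)) = (\<Sum>i\<le>m. s (c i) (y^i)) - (\<Sum>i\<le>m. s (c i * l^i) 1)"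
      unfolding ai by (rule sum_subtractf)
    also have "\<dots> = - s PP 1" using p0 by (simp add: PP_def scale_sum_left)
    finally show ?thesis .
  qed
  have e1: "(y - a) * (\<Sum>i\<le>m. s (c i) (Q i)) = - s PP 1"
    using e by (simp add: sum_distrib_left QR(1) mr)
  have e2: "(\<Sum>i\<le>m. s (c i) (R i)) * (y - a) = - s PP 1"
    using e by (simp add: sum_distrib_right QR(2) ml)
  have PP0: "PP \<noteq> 0" using P PP_def by simp
  have inv: "(- s PP 1) * s (- inverse PP) 1 = 1" "s (- inverse PP) 1 * (- s PP 1) = 1"
    using PP0 by (simp_all add: s1mult)
  have r: "(y - a) * ((\<Sum>i\<le>m. s (c i) (Q i)) * s (- inverse PP) 1) = 1"
    using e1 inv(1) by (metis mult.assoc)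
  have l: "(s (- inverse PP) 1 * (\<Sum>i\<le>m. s (c i) (R i))) * (y - a) = 1"
    using e2 inv(2) by (metis mult.assoc)
  have "y - a \<in> units" by (rule units_lr[OF r l])
  then show ?thesis unfolding a_def .
qed

lemma good_fd:
  assumes fd: "finite_dimensional_vector_space s Bs"
    and inf: "infinite (UNIV :: 'k set)"
  shows "\<exists>t. t \<noteq> 0 \<and> 1 + s t y \<in> units"
proof -
  interpret fd: finite_dimensional_vector_space s Bs by (rule fd)
  define m where "m = card Bs"
  have "\<exists>c. (\<exists>i\<le>m. c i \<noteq> 0) \<and> (\<Sum>i\<le>m. s (c i) (y^i)) = 0"
  proof (cases "inj_on (\<lambda>i. y^i) {..m}")
    case True
    define S where "S = (\<lambda>i. y^i) ` {..m}"
    have cS: "card S = Suc m" unfolding S_def by (simp add: card_image[OF True])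
    have finS: "finite S" unfolding S_def by simp
    have "\<not> independent S"
    proof
      assume "independent S"
      then have "card S \<le> dim S" using fd.independent_bound_general by blast
      also have "\<dots> \<le> m" using fd.dim_subset_UNIV[of S] unfolding fd.dimension_def m_def .
      finally show False using cS by simp
    qed
    then have "\<exists>u. (\<exists>v\<in>S. u v \<noteq> 0) \<and> (\<Sum>v\<in>S. s (u v) v) = 0"
      using dependent_finite[OF finS] by simp
    then obtain u where u: "\<exists>v\<in>S. u v \<noteq> 0" "(\<Sum>v\<in>S. s (u v) v) = 0"
      by (elim exE conjE)
    have "(\<Sum>i\<le>m. s (u (y^i)) (y^i)) = (\<Sum>v\<in>S. s (u v) v)"
      unfolding S_def using sum.reindex[OF True, of "\<lambda>v. s (u v) v"] by (simp add: comp_def)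
    then have su: "(\<Sum>i\<le>m. s (u (y^i)) (y^i)) = 0" using u(2) by (rule trans)
    obtain v where v: "v \<in> S" "u v \<noteq> 0" using u(1) by blast
    then obtain i where i: "i \<le> m" "v = y^i" unfolding S_def by blast
    have "u (y^i) \<noteq> 0" using i v(2) by simp
    then have "\<exists>i\<le>m. u (y^i) \<noteq> 0" using i(1) by blast
    with su show ?thesis by (intro exI[of _ "\<lambda>i. u (y^i)"] conjI)
  next
    case False
    then obtain i j where ij: "i \<le> m" "j \<le> m" "i \<noteq> j" "y^i = y^j" by (auto simp: inj_on_def)
    define c where "c k = (if k = i then 1 else 0) - (if k = j then 1 else (0::'k))" for k
    have "(\<Sum>k\<le>m. s (c k) (y^k)) = (\<Sum>k\<le>m. (if k = i then y^k else 0)) - (\<Sum>k\<le>m. (if k = j then y^k else 0))"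
    proof -
      have "s (c k) (y^k) = (if k = i then y^k else 0) - (if k = j then y^k else 0)" for k
        by (simp add: c_def scale_left_diff_distrib)
      then show ?thesis by (simp add: sum_subtractf)
    qed
    also have "\<dots> = 0" using ij by simp
    finally show ?thesis using ij by (intro exI[of _ c]) (auto simp: c_def)
  qed
  then obtain c where c: "\<exists>i\<le>m. c i \<noteq> 0" "(\<Sum>i\<le>m. s (c i) (y^i)) = 0" by blast
  define p where "p = (\<Sum>i\<le>m. monom (c i) i)"
  have pe: "poly p x = (\<Sum>i\<le>m. c i * x^i)" for x by (simp add: p_def poly_sum poly_monom)
  have "p \<noteq> 0"
  proof
    assume "p = 0"
    obtain i where i: "i \<le> m" "c i \<noteq> 0" using c by blast
    have "coeff p i = c i" using i by (simp add: p_def coeff_sum)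
    then show False using \<open>p = 0\<close> i by simp
  qed
  then have fr: "finite (insert 0 {x. poly p x = 0})" using poly_roots_finite by blast
  have "\<not> UNIV \<subseteq> insert 0 {x. poly p x = 0}"
    using inf fr finite_subset by blast
  then obtain l where l: "l \<noteq> 0" "poly p l \<noteq> 0" by blast
  have P: "(\<Sum>i\<le>m. c i * l^i) \<noteq> 0" using l(2) unfolding pe .
  have U: "y - s l 1 \<in> units" by (rule poly_unit[OF c(2) P])
  define t where "t = - inverse l"
  have t0: "t \<noteq> 0" using l by (simp add: t_def)
  have tl: "t * l = -1" using l(1) by (simp add: t_def)
  have "s t (y - s l 1) = s t y - s (t*l) 1" by (simp add: scale_right_diff_distrib)
  also have "\<dots> = 1 + s t y" unfolding tl by simp
  finally have "1 + s t y \<in> units" using s_units[OF t0 U] by simp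
  then show ?thesis using t0 by blast
qed

end


lemma geo_half: "(\<Sum>i\<in>{m..<m+k}. (1/2::real)^i) = 2*(1/2)^m - 2*(1/2)^(m+k)"
proof (induction k)
  case 0 then show ?case by simp
next
  case (Suc k)
  have "(\<Sum>i\<in>{m..<m+Suc k}. (1/2::real)^i) = (\<Sum>i\<in>{m..<m+k}. (1/2::real)^i) + (1/2)^(m+k)"
    by simp
  also have "\<dots> = 2*(1/2)^m - 2*(1/2)^(m+k) + (1/2)^(m+k)" using Suc by simp
  also have "\<dots> = 2*(1/2)^m - 2*(1/2::real)^(m+Suc k)" by simp
  finally show ?case .
qed

lemma geo_half_le: assumes "m \<le> n" shows "(\<Sum>i\<in>{m..<n}. (1/2::real)^i) \<le> 2*(1/2)^m"
proof -
  obtain k where n: "n = m + k" using assms le_Suc_ex by blast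
  have "(\<Sum>i\<in>{m..<n}. (1/2::real)^i) = 2*(1/2)^m - 2*(1/2)^(m+k)" unfolding n by (rule geo_half)
  also have "\<dots> \<le> 2*(1/2)^m" by simp
  finally show ?thesis .
qed

lemma neumann:
  fixes N :: "'a::ring_1 \<Rightarrow> real" and x :: 'a
  assumes N0: "\<And>x. N x = 0 \<longleftrightarrow> x = 0"
  and tri: "\<And>x y. N (x+y) \<le> N x + N y"
  and neg: "\<And>x. N (-x) = N x"
  and sub: "\<And>x y. N (x*y) \<le> N x * N y"
  and comp: "\<And>X :: nat \<Rightarrow> 'a. (\<forall>e>0. \<exists>M. \<forall>m\<ge>M. \<forall>n\<ge>M. N (X m - X n) < e) \<Longrightarrow> \<exists>L. \<forall>e>0. \<exists>M. \<forall>n\<ge>M. N (X n - L) < e"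
  and xs: "N x \<le> 1/2"
  shows "1 - x \<in> units"
proof -
  have nn: "0 \<le> N z" for z
  proof -
    have "N (z + -z) \<le> N z + N (-z)" by (rule tri)
    then show ?thesis using N0[of 0] neg[of z] by simp
  qed
  have sym: "N (u - v) = N (v - u)" for u v
    using neg[of "u - v"] by simp
  define h :: real where "h = 1/2"
  have h0: "0 \<le> h" "h \<le> 1" "h < 1" "0 < h" by (simp_all add: h_def)
  have pw: "N (x^i) \<le> N 1 * h^i" for i
  proof (induction i)
    case 0 then show ?case by simp
  next
    case (Suc i)
    have "N (x^Suc i) \<le> N (x^i) * N x" unfolding power_Suc2 by (rule sub)
    also have "\<dots> \<le> (N 1 * h^i) * h"
      using Suc xs nn[of x] nn[of "x^i"] h0 unfolding h_def by (intro mult_mono) auto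
    also have "\<dots> = N 1 * h^Suc i" by (simp add: mult.assoc)
    finally show ?case .
  qed
  have Nsum: "N (\<Sum>i\<in>A. f i) \<le> (\<Sum>i\<in>A. N (f i))" if "finite A" for A and f :: "nat \<Rightarrow> 'a"
    using that
  proof (induction A rule: finite_induct)
    case empty then show ?case using N0[of 0] by simp
  next
    case (insert a A)
    have "N (\<Sum>i\<in>insert a A. f i) = N (f a + (\<Sum>i\<in>A. f i))" using insert by simp
    also have "\<dots> \<le> N (f a) + N (\<Sum>i\<in>A. f i)" by (rule tri)
    also have "\<dots> \<le> N (f a) + (\<Sum>i\<in>A. N (f i))" using insert by simp
    also have "\<dots> = (\<Sum>i\<in>insert a A. N (f i))" using insert by simp
    finally show ?case .
  qed
  define S where "S n = (\<Sum>i<n. x^i)" for n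
  have tail: "N (S n - S m) \<le> 2 * N 1 * h^m" if mn: "m \<le> n" for m n
  proof -
    have "S n - S m = (\<Sum>i\<in>{m..<n}. x^i)"
      unfolding S_def using mn by (simp add: sum_diff_nat_ivl lessThan_atLeast0)
    then have "N (S n - S m) \<le> (\<Sum>i\<in>{m..<n}. N (x^i))" using Nsum by simp
    also have "\<dots> \<le> (\<Sum>i\<in>{m..<n}. N 1 * h^i)" using pw by (rule sum_mono)
    also have "\<dots> = N 1 * (\<Sum>i\<in>{m..<n}. h^i)" by (simp add: sum_distrib_left)
    also have "\<dots> \<le> N 1 * (2*h^m)"
      using geo_half_le[OF mn] nn[of 1] unfolding h_def by (intro mult_left_mono) auto
    finally show ?thesis by simp
  qed
  have small: "\<exists>M. \<forall>n\<ge>M. C * h^n < e" if "e > 0" "C \<ge> 0" for e C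
  proof -
    have "e/(C+1) > 0" using that by simp
    then obtain M where M: "h^M < e / (C + 1)" using real_arch_pow_inv[of "e/(C+1)" h] h0 by blast
    have "C * h^n < e" if nM: "n \<ge> M" for n
    proof -
      have "h^n \<le> h^M" using h0 by (intro power_decreasing[OF nM]) auto
      then have "C * h^n \<le> C * h^M" using \<open>C \<ge> 0\<close> by (rule mult_left_mono)
      also have "\<dots> \<le> (C+1) * h^M" using h0 by (simp add: distrib_right)
      also have "\<dots> < (C+1) * (e/(C+1))" using M \<open>C \<ge> 0\<close> by (intro mult_strict_left_mono) auto
      also have "\<dots> = e" using \<open>C \<ge> 0\<close> by simp
      finally show ?thesis .
    qed
    then show ?thesis by blast
  qed
  have cauchy: "\<forall>e>0. \<exists>M. \<forall>m\<ge>M. \<forall>n\<ge>M. N (S m - S n) < e"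
  proof (intro allI impI)
    fix e :: real assume e: "e > 0"
    obtain M where M: "\<And>n. n \<ge> M \<Longrightarrow> 2 * N 1 * h^n < e" using small[OF e] nn[of 1] by fastforce
    have "N (S m - S n) < e" if "m \<ge> M" "n \<ge> M" for m n
    proof (cases "m \<le> n")
      case True
      have "N (S m - S n) = N (S n - S m)" by (rule sym)
      also have "\<dots> \<le> 2 * N 1 * h^m" using True by (rule tail)
      also have "\<dots> < e" using M that by blast
      finally show ?thesis .
    next
      case False
      have "N (S m - S n) \<le> 2 * N 1 * h^n" using False by (intro tail) simp
      also have "\<dots> < e" using M that by blast
      finally show ?thesis .
    qed
    then show "\<exists>M. \<forall>m\<ge>M. \<forall>n\<ge>M. N (S m - S n) < e" by blast
  qed
  obtain L where L: "\<And>e. e > 0 \<Longrightarrow> \<exists>M. \<forall>n\<ge>M. N (S n - L) < e"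
    using comp[of S, OF cauchy] by blast
  have telL: "(1 - x) * S n = 1 - x^n" for n
  proof (induction n)
    case 0 then show ?case by (simp add: S_def)
  next
    case (Suc n)
    have "(1 - x) * S (Suc n) = (1 - x) * S n + (1 - x) * x^n" by (simp add: S_def distrib_left)
    also have "\<dots> = 1 - x^Suc n" using Suc by (simp add: algebra_simps)
    finally show ?case .
  qed
  have telR: "S n * (1 - x) = 1 - x^n" for n
  proof (induction n)
    case 0 then show ?case by (simp add: S_def)
  next
    case (Suc n)
    have "S (Suc n) * (1 - x) = S n * (1 - x) + x^n * (1 - x)" by (simp add: S_def distrib_right)
    also have "\<dots> = 1 - x^Suc n" using Suc by (simp add: algebra_simps power_commutes)
    finally show ?case .
  qed
  have zero: "z = 0" if "\<And>e. e > 0 \<Longrightarrow> N z < e" for z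
  proof (rule ccontr)
    assume "z \<noteq> 0"
    then have "N z > 0" using nn[of z] N0[of z] by simp
    then show False using that[of "N z"] by simp
  qed
  have est: "N (w * (L - S n)) \<le> N w * N (S n - L)" "N ((L - S n) * w) \<le> N w * N (S n - L)" for w n
  proof -
    have "N (w * (L - S n)) \<le> N w * N (L - S n)" by (rule sub)
    then show "N (w * (L - S n)) \<le> N w * N (S n - L)" using sym[of L "S n"] by simp
    have "N ((L - S n) * w) \<le> N (L - S n) * N w" by (rule sub)
    then show "N ((L - S n) * w) \<le> N w * N (S n - L)" using sym[of L "S n"] by (simp add: mult.commute)
  qed
  have conv: "\<exists>n. N w * N (S n - L) < e/2 \<and> N 1 * h^n < e/2" if e: "e > 0" for e w
  proof -
    have e2: "e/2 > 0" using e by simp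
    obtain M1 where M1: "\<And>n. n \<ge> M1 \<Longrightarrow> N (S n - L) < (e/2) / (N w + 1)"
      using L[of "(e/2)/(N w + 1)"] e2 nn[of w] by fastforce
    obtain M2 where M2: "\<And>n. n \<ge> M2 \<Longrightarrow> N 1 * h^n < e/2" using small[OF e2 nn[of 1]] by blast
    define n where "n = max M1 M2"
    have "N w * N (S n - L) \<le> (N w + 1) * N (S n - L)"
      using nn[of "S n - L"] by (simp add: distrib_right)
    also have "\<dots> < (N w + 1) * ((e/2) / (N w + 1))"
      using M1[of n] nn[of w] by (intro mult_strict_left_mono) (auto simp: n_def)
    also have "\<dots> = e/2" using nn[of w] by (simp add: field_simps)
    finally have "N w * N (S n - L) < e/2" .
    moreover have "N 1 * h^n < e/2" using M2 by (simp add: n_def)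
    ultimately show ?thesis by blast
  qed
  have r: "(1 - x) * L = 1"
  proof -
    have "(1 - x) * L - 1 = 0"
    proof (rule zero)
      fix e :: real assume e: "e > 0"
      obtain n where n: "N (1 - x) * N (S n - L) < e/2" "N 1 * h^n < e/2" using conv[OF e] by blast
      have eq: "(1 - x) * L - 1 = (1 - x) * (L - S n) + - (x^n)"
        using telL[of n] by (simp add: algebra_simps)
      have "N ((1 - x) * L - 1) \<le> N ((1 - x) * (L - S n)) + N (- (x^n))" unfolding eq by (rule tri)
      also have "\<dots> \<le> N (1 - x) * N (S n - L) + N 1 * h^n"
        using est(1)[where w="1 - x" and n=n] pw[of n] neg[of "x^n"] by simp
      also have "\<dots> < e" using n by simp
      finally show "N ((1 - x) * L - 1) < e" .
    qed
    then show ?thesis by simp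
  qed
  have l: "L * (1 - x) = 1"
  proof -
    have "L * (1 - x) - 1 = 0"
    proof (rule zero)
      fix e :: real assume e: "e > 0"
      obtain n where n: "N (1 - x) * N (S n - L) < e/2" "N 1 * h^n < e/2" using conv[OF e] by blast
      have eq: "L * (1 - x) - 1 = (L - S n) * (1 - x) + - (x^n)"
        using telR[of n] by (simp add: algebra_simps)
      have "N (L * (1 - x) - 1) \<le> N ((L - S n) * (1 - x)) + N (- (x^n))" unfolding eq by (rule tri)
      also have "\<dots> \<le> N (1 - x) * N (S n - L) + N 1 * h^n"
        using est(2)[where w="1 - x" and n=n] pw[of n] neg[of "x^n"] by simp
      also have "\<dots> < e" using n by simp
      finally show "N (L * (1 - x) - 1) < e" .
    qed
    then show ?thesis by simp
  qed
  show ?thesis by (rule units_lr[OF r l])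
qed



lemma phi_props:
  fixes \<phi> :: "'k::field \<Rightarrow> 'b::field"
  assumes b: "bij \<phi>" and h: "\<forall>x y. \<phi> (x + y) = \<phi> x + \<phi> y \<and> \<phi> (x * y) = \<phi> x * \<phi> y"
  shows "\<phi> 0 = 0" "\<phi> 1 = 1" "\<phi> (-1) = -1"
proof -
  have "\<phi> (0 + 0) = \<phi> 0 + \<phi> 0" using h by blast
  then show p0: "\<phi> 0 = 0" by (metis add.right_neutral add_left_cancel)
  have "\<phi> 1 \<noteq> \<phi> 0" using b by (metis bij_def inj_eq zero_neq_one)
  then have n1: "\<phi> 1 \<noteq> 0" using p0 by simp
  have "\<phi> (1 * 1) = \<phi> 1 * \<phi> 1" using h by blast
  then have "\<phi> 1 * \<phi> 1 = \<phi> 1 * 1" by simp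
  then show p1: "\<phi> 1 = 1" using n1 by (metis mult_left_cancel)
  have "\<phi> (1 + -1) = \<phi> 1 + \<phi> (-1)" using h by blast
  then have "0 = 1 + \<phi> (-1)" using p0 p1 by simp
  then show "\<phi> (-1) = -1" by (simp add: eq_neg_iff_add_eq_0 add.commute)
qed

context kalg begin

lemma good_banach:
  assumes ban: "banach_alg_norm s a N" and an1: "a (-1) = 1"
    and apos: "\<And>r. r > 0 \<Longrightarrow> \<exists>t. t \<noteq> 0 \<and> a t = r"
  shows "\<exists>t. t \<noteq> 0 \<and> 1 + s t y \<in> units"
proof -
  have N0: "\<And>x. N x = 0 \<longleftrightarrow> x = 0"
   and tri: "\<And>x y. N (x+y) \<le> N x + N y"
   and hom: "\<And>c x. N (s c x) = a c * N x"
   and sub: "\<And>x y. N (x*y) \<le> N x * N y"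
   and comp: "\<And>X :: nat \<Rightarrow> 'a. (\<forall>e>0. \<exists>M. \<forall>m\<ge>M. \<forall>n\<ge>M. N (X m - X n) < e) \<Longrightarrow> \<exists>L. \<forall>e>0. \<exists>M. \<forall>n\<ge>M. N (X n - L) < e"
    using ban unfolding banach_alg_norm_def by blast+
  have neg: "N (-x) = N x" for x
  proof -
    have "-x = s (-1) x" by simp
    then show ?thesis using hom[of "-1" x] an1 by simp
  qed
  have nny: "0 \<le> N y"
  proof -
    have "N (y + -y) \<le> N y + N (-y)" by (rule tri)
    then show ?thesis using N0[of 0] neg[of y] by simp
  qed
  define r where "r = 1 / (2 * (N y + 1))"
  have r0: "r > 0" using nny by (simp add: r_def)
  obtain t0 where t0: "t0 \<noteq> 0" "a t0 = r" using apos[OF r0] by blast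
  have "N (s t0 y) = r * N y" using hom t0 by simp
  also have "\<dots> \<le> 1/2" using nny by (simp add: r_def field_simps)
  finally have xs: "N (s t0 y) \<le> 1/2" .
  have "1 - s t0 y \<in> units" by (rule neumann[OF N0 tri neg sub comp xs])
  moreover have "1 + s (-t0) y = 1 - s t0 y" by simp
  ultimately have "1 + s (-t0) y \<in> units" by simp
  then show ?thesis using t0(1) by (intro exI[of _ "-t0"]) simp
qed

lemma good_all:
  assumes H: "H_s s" and inf: "infinite (UNIV :: 'k set)"
  shows "\<exists>t. t \<noteq> 0 \<and> 1 + s t y \<in> units"
proof -
  consider (fd) "fin_dim_alg s" | (ban) "banach_over_R_or_C s" | (fp) "fin_prod_field_ext s"
    using H unfolding H_s_def by blast
  then show ?thesis
  proof cases
    case fd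
    then obtain Bs where "finite_dimensional_vector_space s Bs" unfolding fin_dim_alg_def by blast
    then show ?thesis using good_fd inf by blast
  next
    case fp
    then obtain n and e :: "nat \<Rightarrow> 'a" where comm: "\<And>x y :: 'a. x * y = y * x"
      and sum1: "(\<Sum>i<n. e i) = 1"
      and orth: "\<And>i j. i < n \<Longrightarrow> j < n \<Longrightarrow> i \<noteq> j \<Longrightarrow> e i * e j = 0"
      and rest: "\<And>i. i < n \<Longrightarrow> e i * e i = e i \<and> e i \<noteq> 0 \<and>
           (\<forall>x. e i * x \<noteq> 0 \<longrightarrow> (\<exists>y. (e i * x) * (e i * y) = e i))"
      unfolding fin_prod_field_ext_def by blast
    show ?thesis
    proof (rule good_prod[OF comm sum1 orth])
      show "\<And>i. i < n \<Longrightarrow> e i * e i = e i" using rest by blast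
      show "\<And>i. i < n \<Longrightarrow> e i \<noteq> 0" using rest by blast
      show "\<And>i x. i < n \<Longrightarrow> e i * x \<noteq> 0 \<Longrightarrow> \<exists>y. e i * x * (e i * y) = e i" using rest by blast
      show "infinite (UNIV :: 'k set)" by (rule inf)
    qed
  next
    case ban
    then consider (R) \<phi> N where "bij (\<phi> :: 'k \<Rightarrow> real)"
        "\<forall>x y. \<phi> (x + y) = \<phi> x + \<phi> y \<and> \<phi> (x * y) = \<phi> x * \<phi> y"
        "banach_alg_norm s (\<lambda>c. \<bar>\<phi> c\<bar>) N"
      | (C) \<phi> N where "bij (\<phi> :: 'k \<Rightarrow> complex)"
        "\<forall>x y. \<phi> (x + y) = \<phi> x + \<phi> y \<and> \<phi> (x * y) = \<phi> x * \<phi> y"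
        "banach_alg_norm s (\<lambda>c. cmod (\<phi> c)) N"
      unfolding banach_over_R_or_C_def by blast
    then show ?thesis
    proof cases
      case (R \<phi> N)
      note pp = phi_props[OF R(1) R(2)]
      show ?thesis
      proof (rule good_banach[OF R(3)])
        show "\<bar>\<phi> (-1)\<bar> = 1" using pp by simp
        fix r :: real assume r: "r > 0"
        define t where "t = inv \<phi> r"
        have "\<phi> t = r" unfolding t_def using R(1) by (simp add: bij_def surj_f_inv_f)
        moreover then have "t \<noteq> 0" using pp r by auto
        ultimately show "\<exists>t. t \<noteq> 0 \<and> \<bar>\<phi> t\<bar> = r" using r by auto
      qed
    next
      case (C \<phi> N)
      note pp = phi_props[OF C(1) C(2)]
      show ?thesis
      proof (rule good_banach[OF C(3)])
        show "cmod (\<phi> (-1)) = 1" using pp by simp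
        fix r :: real assume r: "r > 0"
        define t where "t = inv \<phi> (complex_of_real r)"
        have "\<phi> t = complex_of_real r" unfolding t_def using C(1) by (simp add: bij_def surj_f_inv_f)
        moreover then have "t \<noteq> 0" using pp r by auto
        ultimately show "\<exists>t. t \<noteq> 0 \<and> cmod (\<phi> t) = r" using r by auto
      qed
    qed
  qed
qed

end

theorem proposition2p6:
  fixes s :: "'k::field \<Rightarrow> 'a::ring_1 \<Rightarrow> 'a" and A :: "'a set"
  assumes "infinite (UNIV :: 'k set)"
    and "k_algebra s"
    and "H_s s"
    and "finite A"
    and "A \<inter> units \<noteq> {}"
  shows "\<exists>B. B \<subseteq> units \<and> module.independent s B \<and>
             module.span s B = module.span s A"
proof -
  have vs: "vector_space s" and m: "\<forall>c x y. s c (x * y) = s c x * y \<and> s c (x * y) = x * s c y"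
    using assms(2) unfolding k_algebra_def by blast+
  interpret kalg s
  proof (rule kalg.intro[OF vs])
    show "kalg_axioms s" unfolding kalg_axioms_def using m by blast
  qed
  obtain u where u: "u \<in> A" "u \<in> units" using assms(5) by blast
  show ?thesis
    by (rule main_red[OF assms(4) u good_all[OF assms(3) assms(1)]])
qed


end
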